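(* Let $w\ge 3$ and $v=w-1$. Then $$\sum_{\substack{a+b=w\\ a\ge2,\ b\ge1}} T(a,b)=2\Big(\zeta(w)-\zeta(\bar w)+\zeta(\bar v,\bar1)+\zeta(\bar1,\bar v)-\zeta(\bar v,1)-\zeta(\bar1,v)\Big).$$
   Context: Multiple $T$-values: for positive integers $s_1,\dots,s_d$ with $s_1>1$, $T(s_1,\dots,s_d)=\sum_{m_1>\dots>m_d>0,\ m_j\equiv d-j+1\ (\mathrm{mod}\ 2)}\frac{2^d}{m_1^{s_1}\cdots m_d^{s_d}}$. Euler sums: $\zeta(s_1,\dots,s_d;z_1,\dots,z_d)=\sum_{n_1>\dots>n_d>0}\frac{z_1^{n_1}\cdots z_d^{n_d}}{n_1^{s_1}\cdots n_d^{s_d}}$ for $z_j\in\{\pm1\}$ (convergent iff $(s_1,z_1)\ne(1,1)$); a bar over the $j$-th argument means $z_j=-1$, no bar means $z_j=1$. *)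

theory Defs
  imports Complex_Main
begin

text \<open>Euler sums. An argument list is a list of pairs (s_j, z_j) with z_j = 1 or z_j = -1.
  Truncated sum over N > n_1 > ... > n_d > 0 of z_1^n_1 ... z_d^n_d / (n_1^s_1 ... n_d^s_d).\<close>
fun euler_partial :: "(nat \<times> real) list \<Rightarrow> nat \<Rightarrow> real" where
  "euler_partial [] N = 1"
| "euler_partial ((s, z) # rest) N =
     (\<Sum>n\<in>{1..<N}. z ^ n / real n ^ s * euler_partial rest n)"

definition euler_zeta :: "(nat \<times> real) list \<Rightarrow> real" where
  "euler_zeta l = lim (\<lambda>N. euler_partial l N)"

text \<open>Truncated sum over N > m_1 > ... > m_d > 0 with
  m_j \<equiv> d - j + 1 (mod 2) of 2^d / (m_1^s_1 ... m_d^s_d). The argument at position j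
  is followed by d - j further arguments, so the parity condition is
  m_j \<equiv> length(remaining list including s_j) (mod 2).\<close>
fun T_partial :: "nat list \<Rightarrow> nat \<Rightarrow> real" where
  "T_partial [] N = 1"
| "T_partial (s # rest) N =
     (\<Sum>m\<in>{m\<in>{1..<N}. m mod 2 = (length rest + 1) mod 2}.
        2 / real m ^ s * T_partial rest m)"

definition T_value :: "nat list \<Rightarrow> real" where
  "T_value l = lim (\<lambda>N. T_partial l N)"

end

theory Submission
  imports Defs "HOL-Analysis.Analysis" "HOL-Real_Asymp.Real_Asymp"
begin
definition H :: "nat \<Rightarrow> real" where "H m = (\<Sum>k\<in>{1..<m}. 1 / real k)"

lemma H_nonneg: "H m \<ge> 0" unfolding H_def by (intro sum_nonneg) auto

lemma harm_le_ln: assumes "n \<ge> 1" shows "harm n \<le> 1 + ln (real n)"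
proof -
  obtain k where k: "n = Suc k" using assms by (cases n) auto
  have "harm (Suc k) - ln (real (Suc k)) \<le> harm (Suc 0) - ln (real (Suc 0))"
    using decseq_harm_diff_ln unfolding decseq_def by (metis le0 of_nat_Suc)
  then show ?thesis using k by (simp add: harm_def)
qed

lemma H_le: "H m \<le> 1 + ln (real m)" if "m \<ge> 1"
proof -
  have "H m \<le> harm m" unfolding H_def harm_def inverse_eq_divide
    by (rule sum_mono2) auto
  then show ?thesis using harm_le_ln[OF that] by simp
qed

lemma summable_ln: "summable (\<lambda>m. (1 + ln (real m)) / (real m)^2)"
proof (rule summable_comparison_test_bigo)
  show "summable (\<lambda>n. norm (real n powr (-3/2)))"
    using summable_real_powr_iff[of "-3/2"] by simp
  show "(\<lambda>m. (1 + ln (real m)) / (real m)^2) \<in> O(\<lambda>n. real n powr (-3/2))"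
    by real_asymp
qed

lemma summable_H: "summable (\<lambda>m. H m / (real m)^2)"
proof (rule summable_comparison_test[OF _ summable_ln])
  show "\<exists>N. \<forall>n\<ge>N. norm (H n / (real n)\<^sup>2) \<le> (1 + ln (real n)) / (real n)\<^sup>2"
    by (intro exI[of _ 1] allI impI) (auto simp: H_nonneg H_le divide_right_mono)
qed

lemma summable_H_bound:
  fixes f :: "nat \<Rightarrow> real"
  assumes "\<And>m. \<bar>f m\<bar> \<le> C * (H m / (real m)^2)"
  shows "summable f"
  by (rule summable_comparison_test[OF _ summable_mult[OF summable_H, of C]]) (use assms in auto)

lemma sum_from1: "f 0 = 0 \<Longrightarrow> (\<Sum>n\<in>{1..<N}. f n) = (\<Sum>n<(N::nat). f n)"
  by (rule sum.mono_neutral_left) (auto simp: not_le less_one)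

lemma conv_from1:
  fixes f :: "nat \<Rightarrow> real"
  assumes "f 0 = 0" "summable f"
  shows "(\<lambda>N. \<Sum>n\<in>{1..<N}. f n) \<longlonglongrightarrow> suminf f"
proof -
  have "(\<lambda>N. \<Sum>n\<in>{1..<N}. f n) = (\<lambda>N. \<Sum>n<N. f n)"
    using sum_from1[of f, OF assms(1)] by auto
  then show ?thesis using summable_LIMSEQ[OF assms(2)] by simp
qed

definition oddH :: "nat \<Rightarrow> real" where
  "oddH x = (\<Sum>k\<in>{1..<x}. if odd k then 1 / real k else 0)"

lemma pf1:
  fixes m n :: real
  assumes "m > 0" "n > 0" "m \<noteq> n"
  shows "(\<Sum>a\<in>{1..v}. 1 / (m^a * n^(Suc v - a))) = (1/n^v - 1/m^v) / (m - n)"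
proof -
  have "(\<Sum>a\<in>{1..v}. 1 / (m^a * n^(Suc v - a))) = (\<Sum>i<v. 1 / (m^(v-i) * n^(Suc i)))"
    by (rule sum.reindex_bij_witness[where i = "\<lambda>i. v - i" and j = "\<lambda>a. v - a"]) (auto simp: Suc_diff_le)
  also have "\<dots> = (\<Sum>i<v. n^(v - Suc i) * m^i) / (m^v * n^v)"
    unfolding sum_divide_distrib
  proof (rule sum.cong[OF refl])
    fix i assume "i \<in> {..<v}"
    then have i: "i < v" by simp
    have "m^v = m^i * m^(v-i)" by (simp add: power_add[symmetric] i less_imp_le)
    moreover have "n^v = n^(v - Suc i) * n^(Suc i)"
    proof -
      have "v = (v - Suc i) + Suc i" using i by simp
      then show ?thesis by (metis power_add)
    qed
    ultimately show "1 / (m^(v-i) * n^(Suc i)) = n^(v - Suc i) * m^i / (m^v * n^v)"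
      using assms by (simp add: field_simps)
  qed
  also have "\<dots> = ((m^v - n^v) / (m - n)) / (m^v * n^v)"
    using assms by (simp add: power_diff_sumr2)
  also have "\<dots> = (1/n^v - 1/m^v) / (m - n)"
    using assms by (simp add: field_simps)
  finally show ?thesis .
qed

lemma pf2:
  fixes m n :: real
  assumes "m > 0" "n > 0" "m \<noteq> n" "v \<ge> 1"
  shows "(\<Sum>a\<in>{2..v}. 1 / (m^a * n^(Suc v - a))) = (1/n^v - 1/m^v) / (m - n) - 1 / (m * n^v)"
proof -
  have "(\<Sum>a\<in>{1..v}. 1 / (m^a * n^(Suc v - a))) = 1 / (m * n^v) + (\<Sum>a\<in>{2..v}. 1 / (m^a * n^(Suc v - a)))"
    using assms(4) by (subst sum.atLeast_Suc_atMost) (auto simp: numeral_2_eq_2)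
  then show ?thesis using pf1[OF assms(1-3)] by simp
qed

lemma reindexA:
  assumes "even m"
  shows "(\<Sum>n\<in>{1..<m}. if odd n then 1 / real (m - n) else 0) = oddH m"
  unfolding oddH_def
  by (rule sum.reindex_bij_witness[where i = "\<lambda>k. m - k" and j = "\<lambda>n. m - n"])
     (use assms in auto)

lemma reindexB:
  assumes "odd n" "n < N"
  shows "(\<Sum>m\<in>{Suc n..<N}. if even m then 1 / real (m - n) else 0) = oddH (N - n)"
  unfolding oddH_def
  by (rule sum.reindex_bij_witness[where i = "\<lambda>k. k + n" and j = "\<lambda>m. m - n"])
     (use assms in auto)

lemma splitC:
  assumes "n < N"
  shows "(\<Sum>m\<in>{Suc n..<N}. if odd m then 1 / real m else 0) = oddH N - oddH (Suc n)"
  unfolding oddH_def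
  using sum.atLeastLessThan_concat[of 1 "Suc n" N "\<lambda>m. if odd m then 1 / real m else 0"] assms
  by simp

lemma oddH_Suc: "odd n \<Longrightarrow> oddH (Suc n) = oddH n + 1 / real n"
  unfolding oddH_def by (cases n) auto

lemma oddH_Suc_even: "even n \<Longrightarrow> oddH (Suc n) = oddH n"
  unfolding oddH_def by (cases n) auto

lemma tri_swap:
  fixes F :: "nat \<Rightarrow> nat \<Rightarrow> real"
  shows "(\<Sum>m\<in>{1..<N}. \<Sum>n\<in>{1..<m}. F m n) = (\<Sum>n\<in>{1..<N}. \<Sum>m\<in>{Suc n..<N}. F m n)"
proof -
  have "(\<Sum>m\<in>{1..<N}. \<Sum>n\<in>{1..<m}. F m n) = (\<Sum>m\<in>{1..<N}. \<Sum>n\<in>{n. n \<in> {1..<N} \<and> n < m}. F m n)"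
    by (rule sum.cong[OF refl], rule sum.cong) auto
  also have "\<dots> = (\<Sum>n\<in>{1..<N}. \<Sum>m\<in>{m. m \<in> {1..<N} \<and> n < m}. F m n)"
    by (rule sum.swap_restrict) auto
  also have "\<dots> = (\<Sum>n\<in>{1..<N}. \<Sum>m\<in>{Suc n..<N}. F m n)"
    by (rule sum.cong[OF refl], rule sum.cong) auto
  finally show ?thesis .
qed

lemma T_unf: "T_partial [a,b] N = (\<Sum>m\<in>{1..<N}. \<Sum>n\<in>{1..<m}.
    if even m \<and> odd n then 4 / (real m^a * real n^b) else 0)"
proof -
  have "T_partial [a,b] N = (\<Sum>m\<in>{m\<in>{1..<N}. m mod 2 = 0}. 2 / real m^a *
      (\<Sum>n\<in>{n\<in>{1..<m}. n mod 2 = 1}. 2 / real n^b))"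
    by simp
  also have "\<dots> = (\<Sum>m\<in>{1..<N}. if even m then 2 / real m^a *
      (\<Sum>n\<in>{1..<m}. if odd n then 2 / real n^b else 0) else 0)"
    by (simp only: sum.inter_filter[OF finite_atLeastLessThan]) (auto intro!: sum.cong)
  also have "\<dots> = (\<Sum>m\<in>{1..<N}. \<Sum>n\<in>{1..<m}.
    if even m \<and> odd n then 4 / (real m^a * real n^b) else 0)"
    by (rule sum.cong[OF refl]) (auto simp: sum_distrib_left intro!: sum.cong)
  finally show ?thesis .
qed

lemma E1_unf: "euler_partial [(s,z)] N = (\<Sum>m\<in>{1..<N}. z^m / real m^s)"
  by simp

lemma E2_unf: "euler_partial [(s1,z1),(s2,z2)] N =
   (\<Sum>m\<in>{1..<N}. \<Sum>n\<in>{1..<m}. z1^m / real m^s1 * (z2^n / real n^s2))"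
  by (simp add: sum_distrib_left)

lemma LHS_unf:
  assumes "v \<ge> 2"
  shows "(\<Sum>a\<in>{2..v}. T_partial [a, Suc v - a] N) = (\<Sum>m\<in>{1..<N}. \<Sum>n\<in>{1..<m}.
    if even m \<and> odd n then 4 * ((1/real n^v - 1/real m^v) / (real m - real n) - 1 / (real m * real n^v)) else 0)"
proof -
  have "(\<Sum>a\<in>{2..v}. T_partial [a, Suc v - a] N) = (\<Sum>m\<in>{1..<N}. \<Sum>n\<in>{1..<m}. \<Sum>a\<in>{2..v}.
    if even m \<and> odd n then 4 / (real m^a * real n^(Suc v - a)) else 0)"
    unfolding T_unf by (subst sum.swap) (simp add: sum.swap[of _ "{2..v}"])
  also have "\<dots> = (\<Sum>m\<in>{1..<N}. \<Sum>n\<in>{1..<m}.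
    if even m \<and> odd n then 4 * ((1/real n^v - 1/real m^v) / (real m - real n) - 1 / (real m * real n^v)) else 0)"
  proof (intro sum.cong refl)
    fix m n assume m: "m \<in> {1..<N}" and n: "n \<in> {1..<m}"
    have h1: "(\<Sum>a\<in>{2..v}. 1 / (real m^a * real n^(Suc v - a))) =
      (1/real n^v - 1/real m^v) / (real m - real n) - 1 / (real m * real n^v)"
      using m n assms by (intro pf2) auto
    have h2: "(\<Sum>a\<in>{2..v}. 4 / (real m^a * real n^(Suc v - a))) =
       4 * (\<Sum>a\<in>{2..v}. 1 / (real m^a * real n^(Suc v - a)))"
      by (simp add: sum_distrib_left)
    show "(\<Sum>a\<in>{2..v}. if even m \<and> odd n then 4 / (real m^a * real n^(Suc v - a)) else 0) =
      (if even m \<and> odd n then 4 * ((1/real n^v - 1/real m^v) / (real m - real n) - 1 / (real m * real n^v)) else 0)"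
    proof (cases "even m \<and> odd n")
      case False
      then show ?thesis by (simp only: if_not_P[OF False] if_False sum.neutral_const)
    qed (use h1 h2 in simp)
  qed
  finally show ?thesis .
qed

lemma RHS_unf:
  "2 * (euler_partial [(Suc v, 1)] N - euler_partial [(Suc v, -1)] N
         + euler_partial [(v, -1), (1, -1)] N + euler_partial [(1, -1), (v, -1)] N
         - euler_partial [(v, -1), (1, 1)] N - euler_partial [(1, -1), (v, 1)] N)
   = (\<Sum>m\<in>{1..<N}. 2 * (1 / real m^Suc v - (-1)^m / real m^Suc v) +
       (\<Sum>n\<in>{1..<m}. 2 * ((-1)^m / real m^v * ((-1)^n / real n) + (-1)^m / real m * ((-1)^n / real n^v)
          - (-1)^m / real m^v * (1 / real n) - (-1)^m / real m * (1 / real n^v))))"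
  unfolding E1_unf E2_unf
  by (simp add: sum.distrib sum_subtractf sum_distrib_left algebra_simps)

lemma fin_id:
  assumes v: "v \<ge> 2"
  shows "(\<Sum>a\<in>{2..v}. T_partial [a, Suc v - a] N) -
    2 * (euler_partial [(Suc v, 1)] N - euler_partial [(Suc v, -1)] N
         + euler_partial [(v, -1), (1, -1)] N + euler_partial [(1, -1), (v, -1)] N
         - euler_partial [(v, -1), (1, 1)] N - euler_partial [(1, -1), (v, 1)] N)
   = - 4 * (\<Sum>n\<in>{1..<N}. if odd n then (oddH N - oddH (N - n)) / real n^v else 0)"
proof -
  define Lt where "Lt m n = (if even m \<and> odd n then 4 * ((1/real n^v - 1/real m^v) / (real m - real n) - 1 / (real m * real n^v)) else 0)" for m n :: nat
  define R2 where "R2 m n = 2 * ((-1)^m / real m^v * ((-1)^n / real n) + (-1)^m / real m * ((-1)^n / real n^v)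
          - (-1)^m / real m^v * (1 / real n) - (-1)^m / real m * (1 / real n^v))" for m n :: nat
  define S where "S m = 2 * (1 / real m^Suc v - (-1)^m / real m^Suc v)" for m :: nat
  define P1 where "P1 m n = (if even m \<and> odd n then 1 / ((real m - real n) * real n^v) else 0)" for m n :: nat
  define P2 where "P2 m n = (if odd m \<and> odd n then 1 / (real m * real n^v) else 0)" for m n :: nat
  define P3 where "P3 m n = (if even m \<and> odd n then 1 / ((real m - real n) * real m^v) else 0)" for m n :: nat
  define P4 where "P4 m n = (if odd n then (-1)^m / (real m^v * real n) else 0)" for m n :: nat
  have LHS: "(\<Sum>a\<in>{2..v}. T_partial [a, Suc v - a] N) = (\<Sum>m\<in>{1..<N}. \<Sum>n\<in>{1..<m}. Lt m n)"
    unfolding Lt_def by (rule LHS_unf[OF v])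
  have RHS: "2 * (euler_partial [(Suc v, 1)] N - euler_partial [(Suc v, -1)] N
         + euler_partial [(v, -1), (1, -1)] N + euler_partial [(1, -1), (v, -1)] N
         - euler_partial [(v, -1), (1, 1)] N - euler_partial [(1, -1), (v, 1)] N)
     = (\<Sum>m\<in>{1..<N}. S m + (\<Sum>n\<in>{1..<m}. R2 m n))"
    unfolding S_def R2_def by (rule RHS_unf)
  have pw: "Lt m n - R2 m n = 4 * (P1 m n - P2 m n) + 4 * (P4 m n - P3 m n)"
    if "1 \<le> n" "n < m" for m n
  proof -
    have mn: "real m - real n \<noteq> 0" "real m > 0" "real n > 0" using that by auto
    consider "even m" "odd n" | "odd m" "odd n" | "even n" by blast
    then show ?thesis
    proof cases
      case 1
      then show ?thesis unfolding Lt_def R2_def P1_def P2_def P3_def P4_def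
        by (simp add: minus_one_power_iff diff_divide_distrib divide_divide_eq_left algebra_simps)
    next
      case 2
      then show ?thesis unfolding Lt_def R2_def P1_def P2_def P3_def P4_def
        by (simp add: minus_one_power_iff diff_divide_distrib divide_divide_eq_left algebra_simps)
    next
      case 3
      then show ?thesis unfolding Lt_def R2_def P1_def P2_def P3_def P4_def
        by (simp add: minus_one_power_iff diff_divide_distrib divide_divide_eq_left algebra_simps)
    qed
  qed
  have B: "(\<Sum>n\<in>{1..<m}. P4 m n - P3 m n) = - (if odd m then oddH m / real m^v else 0)" for m
  proof -
    have s4: "(\<Sum>n\<in>{1..<m}. P4 m n) = (-1)^m / real m^v * oddH m"
      unfolding P4_def oddH_def sum_distrib_left by (rule sum.cong) auto
    have s3: "(\<Sum>n\<in>{1..<m}. P3 m n) = (if even m then 1 / real m^v * oddH m else 0)"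
    proof (cases "even m")
      case True
      have "(\<Sum>n\<in>{1..<m}. P3 m n) = 1 / real m^v * (\<Sum>n\<in>{1..<m}. if odd n then 1 / real (m - n) else 0)"
        unfolding P3_def sum_distrib_left using True by (intro sum.cong) (auto simp: of_nat_diff)
      then show ?thesis using reindexA[OF True] True by simp
    qed (simp add: P3_def)
    show ?thesis unfolding sum_subtractf s3 s4 by (simp add: minus_one_power_iff)
  qed
  have C: "(\<Sum>m\<in>{Suc n..<N}. P1 m n - P2 m n) =
      (if odd n then (oddH (N - n) - (oddH N - oddH (Suc n))) / real n^v else 0)" if "n < N" for n
  proof (cases "odd n")
    case True
    have s1: "(\<Sum>m\<in>{Suc n..<N}. P1 m n) = 1 / real n^v * (\<Sum>m\<in>{Suc n..<N}. if even m then 1 / real (m - n) else 0)"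
      unfolding P1_def sum_distrib_left using True by (intro sum.cong) (auto simp: of_nat_diff)
    have s2: "(\<Sum>m\<in>{Suc n..<N}. P2 m n) = 1 / real n^v * (\<Sum>m\<in>{Suc n..<N}. if odd m then 1 / real m else 0)"
      unfolding P2_def sum_distrib_left using True by (intro sum.cong) auto
    show ?thesis using True that
      by (simp add: sum_subtractf s1 s2 reindexB splitC diff_divide_distrib)
  qed (simp add: P1_def P2_def)
  have "(\<Sum>a\<in>{2..v}. T_partial [a, Suc v - a] N) -
    2 * (euler_partial [(Suc v, 1)] N - euler_partial [(Suc v, -1)] N
         + euler_partial [(v, -1), (1, -1)] N + euler_partial [(1, -1), (v, -1)] N
         - euler_partial [(v, -1), (1, 1)] N - euler_partial [(1, -1), (v, 1)] N)
     = (\<Sum>m\<in>{1..<N}. (\<Sum>n\<in>{1..<m}. Lt m n - R2 m n) - S m)"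
    unfolding LHS RHS by (simp add: sum_subtractf algebra_simps)
  also have "\<dots> = (\<Sum>m\<in>{1..<N}. (\<Sum>n\<in>{1..<m}. 4 * (P1 m n - P2 m n)) + 4 * (\<Sum>n\<in>{1..<m}. P4 m n - P3 m n) - S m)"
    by (intro sum.cong refl) (simp add: pw sum.distrib sum_distrib_left)
  also have "\<dots> = 4 * (\<Sum>m\<in>{1..<N}. \<Sum>n\<in>{1..<m}. P1 m n - P2 m n) + (\<Sum>m\<in>{1..<N}. 4 * (\<Sum>n\<in>{1..<m}. P4 m n - P3 m n) - S m)"
    by (simp add: sum.distrib sum_subtractf sum_distrib_left algebra_simps)
  also have "(\<Sum>m\<in>{1..<N}. \<Sum>n\<in>{1..<m}. P1 m n - P2 m n) = (\<Sum>n\<in>{1..<N}. \<Sum>m\<in>{Suc n..<N}. P1 m n - P2 m n)"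
    by (rule tri_swap)
  also have "\<dots> = (\<Sum>n\<in>{1..<N}. if odd n then (oddH (N - n) - (oddH N - oddH (Suc n))) / real n^v else 0)"
    by (intro sum.cong refl C) auto
  also have "(\<Sum>m\<in>{1..<N}. 4 * (\<Sum>n\<in>{1..<m}. P4 m n - P3 m n) - S m) =
     (\<Sum>m\<in>{1..<N}. - 4 * (if odd m then oddH m / real m^v else 0) - (if odd m then 4 / real m ^ Suc v else 0))"
    unfolding B by (intro sum.cong refl) (simp add: S_def minus_one_power_iff)
  also have "4 * (\<Sum>n\<in>{1..<N}. if odd n then (oddH (N - n) - (oddH N - oddH (Suc n))) / real n^v else 0) +
     (\<Sum>m\<in>{1..<N}. - 4 * (if odd m then oddH m / real m^v else 0) - (if odd m then 4 / real m ^ Suc v else 0))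
    = (\<Sum>n\<in>{1..<N}. 4 * (if odd n then (oddH (N - n) - (oddH N - oddH (Suc n))) / real n^v else 0) +
     (- 4 * (if odd n then oddH n / real n^v else 0) - (if odd n then 4 / real n ^ Suc v else 0)))"
    by (simp add: sum.distrib sum_distrib_left)
  also have "\<dots> = (\<Sum>n\<in>{1..<N}. - 4 * (if odd n then (oddH N - oddH (N - n)) / real n^v else 0))"
  proof (intro sum.cong refl)
    fix n assume n: "n \<in> {1..<N}"
    show "4 * (if odd n then (oddH (N - n) - (oddH N - oddH (Suc n))) / real n^v else 0) +
     (- 4 * (if odd n then oddH n / real n^v else 0) - (if odd n then 4 / real n ^ Suc v else 0)) =
      - 4 * (if odd n then (oddH N - oddH (N - n)) / real n^v else 0)"
    proof (cases "odd n")
      case True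
      then show ?thesis using n by (simp add: oddH_Suc field_simps)
    qed simp
  qed
  also have "\<dots> = - 4 * (\<Sum>n\<in>{1..<N}. if odd n then (oddH N - oddH (N - n)) / real n^v else 0)"
    by (simp add: sum_distrib_left)
  finally show ?thesis .
qed

lemma summable_inv2: "summable (\<lambda>m. 1 / real m ^ 2)"
  using inverse_power_summable[of 2, where 'a=real] by (simp add: inverse_eq_divide)

lemma bound_inv2:
  fixes f :: "nat \<Rightarrow> real"
  assumes "\<And>m. \<bar>f m\<bar> \<le> C * (1 / real m ^ 2)"
  shows "summable f"
  by (rule summable_comparison_test[OF _ summable_mult[OF summable_inv2, of C]]) (use assms in auto)

lemma conv_T:
  assumes "a \<ge> 2" "b \<ge> 1"
  shows "convergent (\<lambda>N. T_partial [a,b] N)"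
proof -
  define t where "t m = (\<Sum>n\<in>{1..<m}. if even m \<and> odd n then 4 / (real m^a * real n^b) else 0)" for m
  have "summable t"
  proof (rule summable_H_bound[of _ 4])
    fix m
    have "\<bar>t m\<bar> \<le> (\<Sum>n\<in>{1..<m}. \<bar>if even m \<and> odd n then 4 / (real m^a * real n^b) else 0\<bar>)"
      unfolding t_def by (rule sum_abs)
    also have "\<dots> \<le> (\<Sum>n\<in>{1..<m}. 4 * (1 / real n / real m ^ 2))"
    proof (rule sum_mono)
      fix n assume n: "n \<in> {1..<m}"
      have "real m ^ 2 \<le> real m ^ a" using assms n by (intro power_increasing) auto
      moreover have "real n \<le> real n ^ b" using assms n
        by (metis One_nat_def atLeastLessThan_iff of_nat_0_less_iff order_less_le_trans less_one
             not_le power_increasing power_one_right of_nat_1 of_nat_le_iff zero_less_one)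
      ultimately have "real m ^ 2 * real n \<le> real m ^ a * real n ^ b"
        using n by (intro mult_mono) auto
      then have "4 / (real m^a * real n^b) \<le> 4 / (real m ^ 2 * real n)"
        using n by (intro divide_left_mono) auto
      then show "\<bar>if even m \<and> odd n then 4 / (real m^a * real n^b) else 0\<bar> \<le> 4 * (1 / real n / real m ^ 2)"
        using n by (auto simp: mult.commute)
    qed
    also have "\<dots> = 4 * (H m / real m ^ 2)"
      unfolding H_def by (simp add: sum_distrib_left sum_divide_distrib)
    finally show "\<bar>t m\<bar> \<le> 4 * (H m / real m ^ 2)" .
  qed
  moreover have "t 0 = 0" unfolding t_def by simp
  ultimately have "(\<lambda>N. \<Sum>m\<in>{1..<N}. t m) \<longlonglongrightarrow> suminf t" by (rule conv_from1[rotated])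
  then show ?thesis unfolding T_unf t_def convergent_def by blast
qed

lemma conv_E1:
  assumes "s \<ge> 2" "\<bar>z\<bar> = 1"
  shows "convergent (\<lambda>N. euler_partial [(s,z)] N)"
proof -
  have "summable (\<lambda>m. z^m / real m^s)"
  proof (rule bound_inv2[of _ 1])
    fix m
    show "\<bar>z^m / real m^s\<bar> \<le> 1 * (1 / real m ^ 2)"
    proof (cases "m = 0")
      case False
      have "real m ^ 2 \<le> real m ^ s" using assms False by (intro power_increasing) auto
      then show ?thesis using False assms by (simp add: power_abs abs_divide frac_le)
    qed (use assms in \<open>simp add: zero_power\<close>)
  qed
  from conv_from1[OF _ this] assms show ?thesis unfolding E1_unf convergent_def by auto
qed

lemma conv_E2a:
  assumes "s \<ge> 2" "\<bar>z1\<bar> = 1" "\<bar>z2\<bar> = 1"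
  shows "convergent (\<lambda>N. euler_partial [(s,z1),(1,z2)] N)"
proof -
  define t where "t m = (\<Sum>n\<in>{1..<m}. z1^m / real m^s * (z2^n / real n^1))" for m
  have "summable t"
  proof (rule summable_H_bound[of _ 1])
    fix m
    have "\<bar>t m\<bar> \<le> (\<Sum>n\<in>{1..<m}. \<bar>z1^m / real m^s * (z2^n / real n^1)\<bar>)"
      unfolding t_def by (rule sum_abs)
    also have "\<dots> \<le> (\<Sum>n\<in>{1..<m}. 1 / real n / real m ^ 2)"
    proof (rule sum_mono)
      fix n assume n: "n \<in> {1..<m}"
      have "real m ^ 2 \<le> real m ^ s" using assms n by (intro power_increasing) auto
      then have "1 / real m ^ s \<le> 1 / real m ^ 2" using n by (intro divide_left_mono) auto
      then have "1 / real m ^ s * (1 / real n) \<le> 1 / real m ^ 2 * (1 / real n)"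
        by (rule mult_right_mono) auto
      then show "\<bar>z1^m / real m^s * (z2^n / real n^1)\<bar> \<le> 1 / real n / real m ^ 2"
        using assms by (simp add: power_abs abs_mult abs_divide mult.commute)
    qed
    also have "\<dots> = 1 * (H m / real m ^ 2)"
      unfolding H_def by (simp add: sum_divide_distrib)
    finally show "\<bar>t m\<bar> \<le> 1 * (H m / real m ^ 2)" .
  qed
  moreover have "t 0 = 0" unfolding t_def by simp
  ultimately have "(\<lambda>N. \<Sum>m\<in>{1..<N}. t m) \<longlonglongrightarrow> suminf t" by (rule conv_from1[rotated])
  then show ?thesis unfolding E2_unf t_def convergent_def by blast
qed

lemma alt_harm_conv: "convergent (\<lambda>N. \<Sum>n\<in>{1..<N}. (-1)^n / real n)"
proof -
  have "summable (\<lambda>k. (-1)^k / real (Suc k))"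
    using alternating_harmonic_series_sums by (rule sums_summable)
  then have "summable (\<lambda>k. - ((-1)^k / real (Suc k)))" by (rule summable_minus)
  then have "summable (\<lambda>k. (-1::real)^(Suc k) / real (Suc k))" by simp
  then have "summable (\<lambda>k. (-1::real)^k / real k)" by (rule summable_Suc_iff[THEN iffD1])
  from conv_from1[OF _ this] show ?thesis unfolding convergent_def by auto
qed

lemma conv_E2b:
  assumes "s \<ge> 2" "\<bar>z\<bar> = 1"
  shows "convergent (\<lambda>N. euler_partial [(1,-1),(s,z)] N)"
proof -
  define c where "c k = z^k / real k ^ s" for k
  define A where "A x = (\<Sum>n\<in>{1..<x}. (-1)^n / real n)" for x
  define C where "C x = (\<Sum>k\<in>{1..<x}. c k)" for x
  have c0: "c 0 = 0" unfolding c_def using assms by (simp add: zero_power)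
  have sc: "summable c"
  proof (rule bound_inv2[of _ 1])
    fix m
    show "\<bar>c m\<bar> \<le> 1 * (1 / real m ^ 2)"
    proof (cases "m = 0")
      case False
      have "real m ^ 2 \<le> real m ^ s" using assms False by (intro power_increasing) auto
      then show ?thesis using False assms by (simp add: c_def power_abs abs_divide frac_le)
    qed (use c0 in simp)
  qed
  have CC: "C \<longlonglongrightarrow> suminf c" unfolding C_def by (rule conv_from1[OF c0 sc])
  obtain LA where AA: "A \<longlonglongrightarrow> LA" using alt_harm_conv unfolding A_def convergent_def by blast
  then have "Bseq A" using convergent_imp_Bseq convergent_def by blast
  then obtain K where K: "K > 0" "\<And>n. norm (A n) \<le> K" by (auto elim: BseqE)
  define d where "d k = c k * A (Suc k)" for k
  have sd: "summable d"
  proof (rule bound_inv2[of _ K])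
    fix m
    show "\<bar>d m\<bar> \<le> K * (1 / real m ^ 2)"
    proof (cases "m = 0")
      case False
      have "real m ^ 2 \<le> real m ^ s" using assms False by (intro power_increasing) auto
      then have "\<bar>c m\<bar> \<le> 1 / real m ^ 2" using False assms by (simp add: c_def power_abs abs_divide frac_le)
      moreover have "\<bar>A (Suc m)\<bar> \<le> K" using K(2)[of "Suc m"] by simp
      ultimately have "\<bar>c m\<bar> * \<bar>A (Suc m)\<bar> \<le> 1 / real m ^ 2 * K"
        by (intro mult_mono) auto
      then show ?thesis by (simp add: d_def abs_mult mult.commute)
    qed (use c0 K in \<open>simp add: d_def\<close>)
  qed
  have d0: "d 0 = 0" unfolding d_def c0 by simp
  have DD: "(\<lambda>N. \<Sum>k\<in>{1..<N}. d k) \<longlonglongrightarrow> suminf d" by (rule conv_from1[OF d0 sd])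
  have eq: "euler_partial [(1,-1),(s,z)] N = A N * C N - (\<Sum>k\<in>{1..<N}. d k)" for N
  proof -
    have "euler_partial [(1,-1),(s,z)] N = (\<Sum>m\<in>{1..<N}. \<Sum>n\<in>{1..<m}. (-1)^m / real m * c n)"
      unfolding E2_unf c_def by simp
    also have "\<dots> = (\<Sum>n\<in>{1..<N}. \<Sum>m\<in>{Suc n..<N}. (-1)^m / real m * c n)"
      by (rule tri_swap)
    also have "\<dots> = (\<Sum>n\<in>{1..<N}. c n * (A N - A (Suc n)))"
    proof (intro sum.cong refl)
      fix n assume n: "n \<in> {1..<N}"
      have "A (Suc n) + (\<Sum>m\<in>{Suc n..<N}. (-1)^m / real m) = A N"
        unfolding A_def using n by (intro sum.atLeastLessThan_concat) auto
      then have h: "(\<Sum>m\<in>{Suc n..<N}. (-1)^m / real m) = A N - A (Suc n)" by linarith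
      show "(\<Sum>m\<in>{Suc n..<N}. (-1)^m / real m * c n) = c n * (A N - A (Suc n))"
        unfolding sum_distrib_right[symmetric] h by (simp add: mult.commute)
    qed
    also have "\<dots> = A N * C N - (\<Sum>k\<in>{1..<N}. d k)"
      unfolding C_def d_def by (simp add: sum_subtractf sum_distrib_left algebra_simps)
    finally show ?thesis .
  qed
  have "(\<lambda>N. A N * C N - (\<Sum>k\<in>{1..<N}. d k)) \<longlonglongrightarrow> LA * suminf c - suminf d"
    by (intro tendsto_intros AA CC DD)
  then show ?thesis unfolding eq convergent_def by blast
qed

lemma oddH_diff: "1 \<le> x \<Longrightarrow> x \<le> N \<Longrightarrow> oddH N - oddH x = (\<Sum>j\<in>{x..<N}. if odd j then 1 / real j else 0)"
  unfolding oddH_def using sum.atLeastLessThan_concat[of 1 x N "\<lambda>j. if odd j then 1 / real j else 0"]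
  by simp

lemma key_ineq:
  fixes n j N :: nat
  assumes "n \<ge> 1" "j \<ge> 1" "N \<le> n + j"  "N \<ge> 1"
  shows "1 / (real n ^ 2 * real j) \<le> (1 / real n ^ 2 + 1 / (real n * real j)) / real N"
proof -
  have pos: "real n > 0" "real j > 0" "real N > 0" using assms by auto
  have "(1 / real n ^ 2 + 1 / (real n * real j)) / real N = (real j + real n) / (real n ^ 2 * real j * real N)"
    using pos by (simp add: field_simps power2_eq_square)
  moreover have "1 / (real n ^ 2 * real j) = real N / (real n ^ 2 * real j * real N)"
    using pos by simp
  moreover have "real N / (real n ^ 2 * real j * real N) \<le> (real j + real n) / (real n ^ 2 * real j * real N)"
    using pos assms by (intro divide_right_mono) auto
  ultimately show ?thesis by simp
qed

lemma err_lim: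
  assumes v: "v \<ge> 2"
  shows "(\<lambda>N. \<Sum>n\<in>{1..<N}. if odd n then (oddH N - oddH (N - n)) / real n^v else 0) \<longlonglongrightarrow> 0"
proof (rule tendsto_sandwich[of "\<lambda>_. 0" _ _ "\<lambda>N. (2 + ln (real N)) * (1 + ln (real N)) / real N"])
  show "((\<lambda>_. 0::real) \<longlongrightarrow> 0) sequentially" by simp
  show "(\<lambda>N. (2 + ln (real N)) * (1 + ln (real N)) / real N) \<longlonglongrightarrow> 0" by real_asymp
  have Dnn: "0 \<le> oddH N - oddH (N - n)" if "n \<in> {1..<N}" for n N
    using that by (subst oddH_diff) (auto intro!: sum_nonneg)
  show "\<forall>\<^sub>F N in sequentially. 0 \<le> (\<Sum>n\<in>{1..<N}. if odd n then (oddH N - oddH (N - n)) / real n^v else 0)"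
    by (intro always_eventually allI sum_nonneg) (auto intro!: divide_nonneg_nonneg Dnn)
  show "\<forall>\<^sub>F N in sequentially. (\<Sum>n\<in>{1..<N}. if odd n then (oddH N - oddH (N - n)) / real n^v else 0)
          \<le> (2 + ln (real N)) * (1 + ln (real N)) / real N"
  proof (rule eventually_sequentiallyI[of 1])
    fix N :: nat assume N: "N \<ge> 1"
    have HN: "0 \<le> H N" "H N \<le> 1 + ln (real N)" using H_nonneg H_le[OF N] by auto
    have tb: "(if odd n then (oddH N - oddH (N - n)) / real n^v else 0) \<le> (1 + H N) / real N * (1 / real n)"
      if n: "n \<in> {1..<N}" for n
    proof -
      define Sj where "Sj = (\<Sum>j\<in>{N-n..<N}. 1 / real j)"
      have D: "0 \<le> oddH N - oddH (N - n)" using Dnn[OF n] .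
      have DS: "oddH N - oddH (N - n) \<le> Sj"
        unfolding Sj_def using n by (subst oddH_diff) (auto intro!: sum_mono)
      have SH: "Sj \<le> H N" unfolding Sj_def H_def using n by (intro sum_mono2) auto
      have "(oddH N - oddH (N - n)) / real n^v \<le> (oddH N - oddH (N - n)) / real n^2"
        using n v D by (intro divide_left_mono power_increasing) auto
      also have "\<dots> \<le> Sj / real n^2" using DS by (intro divide_right_mono) auto
      also have "\<dots> = (\<Sum>j\<in>{N-n..<N}. 1 / (real n ^ 2 * real j))"
        unfolding Sj_def sum_divide_distrib by (simp add: mult.commute)
      also have "\<dots> \<le> (\<Sum>j\<in>{N-n..<N}. (1 / real n ^ 2 + 1 / (real n * real j)) / real N)"
        using n N by (intro sum_mono key_ineq) auto
      also have "\<dots> = (real n * (1 / real n ^ 2) + 1 / real n * Sj) / real N"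
        unfolding Sj_def using n
        by (simp add: sum.distrib sum_divide_distrib[symmetric] sum_distrib_left)
      also have "\<dots> = (1 + Sj) / real N * (1 / real n)"
        using n by (simp add: field_simps power2_eq_square)
      also have "\<dots> \<le> (1 + H N) / real N * (1 / real n)"
        using SH by (intro mult_right_mono divide_right_mono) auto
      finally show ?thesis using HN D by auto
    qed
    have "(\<Sum>n\<in>{1..<N}. if odd n then (oddH N - oddH (N - n)) / real n^v else 0)
        \<le> (\<Sum>n\<in>{1..<N}. (1 + H N) / real N * (1 / real n))"
      by (intro sum_mono tb)
    also have "\<dots> = (1 + H N) * H N / real N"
      unfolding H_def sum_distrib_left[symmetric] by simp
    also have "\<dots> \<le> (2 + ln (real N)) * (1 + ln (real N)) / real N"
      using HN by (intro divide_right_mono mult_mono) auto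
    finally show "(\<Sum>n\<in>{1..<N}. if odd n then (oddH N - oddH (N - n)) / real n^v else 0)
          \<le> (2 + ln (real N)) * (1 + ln (real N)) / real N" .
  qed
qed

theorem corollary4p3:
  fixes w v :: nat
  assumes "w \<ge> 3" and "v = w - 1"
  shows "(\<Sum>a\<in>{2..w-1}. T_value [a, w - a]) =
    2 * (euler_zeta [(w, 1)] - euler_zeta [(w, -1)]
         + euler_zeta [(v, -1), (1, -1)] + euler_zeta [(1, -1), (v, -1)]
         - euler_zeta [(v, -1), (1, 1)] - euler_zeta [(1, -1), (v, 1)])"
proof -
  have w: "w = Suc v" and v: "v \<ge> 2" using assms by auto
  have cT: "(\<lambda>N. T_partial [a, Suc v - a] N) \<longlonglongrightarrow> T_value [a, Suc v - a]" if "a \<in> {2..v}" for a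
  proof -
    have "2 \<le> a" "1 \<le> Suc v - a" using that by auto
    from conv_T[OF this] show ?thesis unfolding T_value_def convergent_LIMSEQ_iff .
  qed
  have cE: "(\<lambda>N. euler_partial l N) \<longlonglongrightarrow> euler_zeta l" if "convergent (\<lambda>N. euler_partial l N)" for l
    using that unfolding euler_zeta_def convergent_LIMSEQ_iff .
  define LN where "LN N = (\<Sum>a\<in>{2..v}. T_partial [a, Suc v - a] N)" for N
  define RN where "RN N = 2 * (euler_partial [(Suc v, 1)] N - euler_partial [(Suc v, -1)] N
         + euler_partial [(v, -1), (1, -1)] N + euler_partial [(1, -1), (v, -1)] N
         - euler_partial [(v, -1), (1, 1)] N - euler_partial [(1, -1), (v, 1)] N)" for N
  define L where "L = (\<Sum>a\<in>{2..v}. T_value [a, Suc v - a])"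
  define R where "R = 2 * (euler_zeta [(Suc v, 1)] - euler_zeta [(Suc v, -1)]
         + euler_zeta [(v, -1), (1, -1)] + euler_zeta [(1, -1), (v, -1)]
         - euler_zeta [(v, -1), (1, 1)] - euler_zeta [(1, -1), (v, 1)])"
  have LL: "LN \<longlonglongrightarrow> L" unfolding LN_def L_def by (intro tendsto_sum cT)
  have RR: "RN \<longlonglongrightarrow> R" unfolding RN_def R_def
    using v by (intro tendsto_intros cE conv_E1 conv_E2a conv_E2b) auto
  have "(\<lambda>N. LN N - RN N) \<longlonglongrightarrow> L - R" using LL RR by (rule tendsto_diff)
  moreover have "(\<lambda>N. LN N - RN N) \<longlonglongrightarrow> - 4 * 0"
    unfolding LN_def RN_def fin_id[OF v] by (intro tendsto_intros err_lim[OF v])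
  ultimately have "L - R = - 4 * 0" by (rule LIMSEQ_unique)
  then have "L = R" by simp
  then show ?thesis unfolding L_def R_def w by simp
qed

end
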